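(* Let $a,b,c \geq 0$ be integers and $k = a + 2b + 3c$ (so $E_2^aE_4^bE_6^c$ has weight $2k$). Define $s_{a,b,c}(n)$ by $\sum_{n\geq 0} s_{a,b,c}(n) q^n = E_2^a E_4^b E_6^c$. Then for all integers $n \geq 1$, $$|s_{a,b,c}(n)| \leq 109 \cdot 2^{2k-1} n^{2k-1} (1+\log(n))^k.$$
   Context: $E_2 = 1 - 24\sum_{n\geq1}\sigma_1(n)q^n$, $E_4 = 1 + 240\sum_{n \geq 1}\sigma_3(n)q^n$, $E_6 = 1 - 504\sum_{n\geq1}\sigma_5(n)q^n$, where $\sigma_\ell(n) = \sum_{d \mid n} d^\ell$, regarded as formal power series in $q$. *)

theory Defs
  imports "HOL-Analysis.Analysis" "HOL-Computational_Algebra.Formal_Power_Series"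
begin

definition sigma :: "nat \<Rightarrow> nat \<Rightarrow> int" where
  "sigma l n = (\<Sum>d | d dvd n. int d ^ l)"

definition E2 :: "int fps" where
  "E2 = Abs_fps (\<lambda>n. if n = 0 then 1 else -24 * sigma 1 n)"

definition E4 :: "int fps" where
  "E4 = Abs_fps (\<lambda>n. if n = 0 then 1 else 240 * sigma 3 n)"

definition E6 :: "int fps" where
  "E6 = Abs_fps (\<lambda>n. if n = 0 then 1 else -504 * sigma 5 n)"

definition s_coeff :: "nat \<Rightarrow> nat \<Rightarrow> nat \<Rightarrow> nat \<Rightarrow> int" where
  "s_coeff a b c n = fps_nth (E2 ^ a * E4 ^ b * E6 ^ c) n"

end

theory Submission
  imports Defs "HOL-Computational_Algebra.Polynomial_FPS"
begin


lemma pascal: "(n choose k) + (n choose Suc k) = (Suc n choose Suc k)"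
  by simp

lemma hockey: "(\<Sum>j\<le>N. (j+r) choose (2*r+1)) = (N+r+1) choose (2*r+2)"
proof (induction N)
  case 0 then show ?case by (simp add: binomial_eq_0)
next
  case (Suc N)
  have "(\<Sum>j\<le>Suc N. (j+r) choose (2*r+1)) = ((N+r+1) choose (2*r+2)) + ((Suc N + r) choose (2*r+1))"
    using Suc by simp
  also have "\<dots> = ((N+r+1) choose (2*r+1)) + ((N+r+1) choose Suc (2*r+1))" by simp
  also have "\<dots> = (Suc (N+r+1) choose Suc (2*r+1))" by (rule pascal)
  finally show ?case by simp
qed

lemma hockey2: "(\<Sum>j\<le>N. ((j+r) choose (2*r+1)) * (N - j)) = (N+r+1) choose (2*r+3)"
proof (induction N)
  case 0 then show ?case by (simp add: binomial_eq_0)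
next
  case (Suc N)
  have "(\<Sum>j\<le>Suc N. ((j+r) choose (2*r+1)) * (Suc N - j))
      = (\<Sum>j\<le>N. ((j+r) choose (2*r+1)) * (Suc N - j))" by simp
  also have "\<dots> = (\<Sum>j\<le>N. ((j+r) choose (2*r+1)) * (N - j) + ((j+r) choose (2*r+1)))"
    by (rule sum.cong) (auto simp: Suc_diff_le)
  also have "\<dots> = (\<Sum>j\<le>N. ((j+r) choose (2*r+1)) * (N - j)) + (\<Sum>j\<le>N. ((j+r) choose (2*r+1)))"
    by (rule sum.distrib)
  also have "\<dots> = ((N+r+1) choose (2*r+3)) + ((N+r+1) choose (2*r+2))"
    by (simp only: Suc.IH hockey)
  also have "\<dots> = ((N+r+1) choose (2*r+2)) + ((N+r+1) choose Suc (2*r+2))" by (simp add: add.commute numeral_3_eq_3 del: binomial_Suc_Suc)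
  also have "\<dots> = (Suc (N+r+1) choose Suc (2*r+2))" by (rule pascal)
  also have "Suc (N+r+1) = Suc N + r + 1" by simp
  also have "Suc (2*r+2) = 2*r+3" by simp
  finally show ?case .
qed

lemma binom_rec_gen: "(Suc n choose Suc (Suc k)) * (Suc (Suc k) * Suc k) = (n choose k) * (Suc n * (n - k))"
proof -
  have e1: "Suc (Suc k) * (Suc n choose Suc (Suc k)) = Suc n * (n choose Suc k)"
    by (rule Suc_times_binomial)
  have e2: "Suc k * (n choose Suc k) = n * ((n-1) choose k)"
    by (rule binomial_absorption)
  have e3: "(n - k) * (n choose k) = n * ((n-1) choose k)"
    by (rule binomial_absorb_comp)
  have "(Suc n choose Suc (Suc k)) * (Suc (Suc k) * Suc k) = (Suc (Suc k) * (Suc n choose Suc (Suc k))) * Suc k"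
    by (simp only: mult.assoc mult.commute mult.left_commute)
  also have "\<dots> = Suc n * (Suc k * (n choose Suc k))" by (simp only: e1 mult.assoc mult.commute mult.left_commute)
  also have "\<dots> = Suc n * ((n - k) * (n choose k))" by (simp only: e2 e3)
  finally show ?thesis by (simp only: mult.assoc mult.commute mult.left_commute)
qed

lemma binom_bound: "((N+r) choose (2*r+1)) * fact (2*r+1) \<le> (N::nat)^(2*r+1)"
proof (induction r)
  case 0 then show ?case by simp
next
  case (Suc r)
  have f: "fact (2*Suc r+1) = (Suc (Suc (2*r+1)) * Suc (2*r+1))*(fact (2*r+1)::nat)"
    by (simp add: fact_Suc algebra_simps)
  have m: "(Suc (N+r))*((N+r)-(2*r+1)) \<le> N*N"
  proof (cases "N \<ge> r+1")
    case True
    then obtain t where "N = r+1+t" by (metis le_add_diff_inverse)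
    then show ?thesis by (simp add: algebra_simps)
  qed simp
  have r: "(Suc (N+r) choose Suc (Suc (2*r+1))) * (Suc (Suc (2*r+1)) * Suc (2*r+1)) = ((N+r) choose (2*r+1)) * (Suc (N+r) * ((N+r) - (2*r+1)))"
    by (rule binom_rec_gen)
  have "((N+Suc r) choose (2*Suc r+1)) * fact (2*Suc r+1) = ((Suc (N+r) choose Suc (Suc (2*r+1))) * (Suc (Suc (2*r+1)) * Suc (2*r+1))) * fact (2*r+1)"
    unfolding f by (simp add: algebra_simps del: binomial_Suc_Suc)
  also have "\<dots> = ((N+r) choose (2*r+1)) * fact (2*r+1) * (Suc (N+r) * ((N+r) - (2*r+1)))"
    unfolding r by (simp only: mult.assoc mult.commute mult.left_commute)
  also have "\<dots> \<le> N^(2*r+1) * (N*N)"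
    by (rule mult_le_mono) (use Suc m in auto)
  also have "\<dots> = N^(2*Suc r+1)" by (simp add: power_add algebra_simps)
  finally show ?case .
qed

definition TT :: "real fps" where "TT = Abs_fps (\<lambda>m. of_nat m)"

lemma TT_pow: "fps_nth (TT^(Suc r)) N = of_nat ((N+r) choose (2*r+1))"
proof (induction r arbitrary: N)
  case 0 then show ?case by (simp add: TT_def)
next
  case (Suc r)
  have "fps_nth (TT^(Suc (Suc r))) N = fps_nth (TT^(Suc r) * TT) N" by (simp only: power_Suc2)
  also have "\<dots> = (\<Sum>j=0..N. of_nat ((j+r) choose (2*r+1)) * of_nat (N - j))"
    by (simp only: fps_mult_nth Suc.IH) (simp add: TT_def del: binomial_Suc_Suc)
  also have "\<dots> = of_nat (\<Sum>j\<le>N. ((j+r) choose (2*r+1)) * (N - j))"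
    by (simp add: atLeast0AtMost del: binomial_Suc_Suc)
  also have "\<dots> = of_nat ((N+Suc r) choose (2*Suc r+1))"
    by (simp only: hockey2) (simp add: numeral_3_eq_3 del: binomial_Suc_Suc)
  finally show ?case .
qed


lemma fact_bound: "(12::nat)^(Suc r) \<le> 24 * fact (2*r+1)"
proof (induction r)
  case 0 then show ?case by simp
next
  case (Suc r)
  have f: "fact (2*Suc r+1) = ((2*r+3)*(2*r+2))*(fact (2*r+1)::nat)"
    by (simp add: fact_Suc algebra_simps)
  show ?case
  proof (cases "r = 0")
    case True then show ?thesis by (simp add: fact_Suc numeral_3_eq_3)
  next
    case False
    then have "12 \<le> (2*r+3)*(2*r+2)" by (cases r) auto
    have "(12::nat)^(Suc (Suc r)) = 12 * 12^(Suc r)" by simp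
    also have "\<dots> \<le> ((2*r+3)*(2*r+2)) * (24 * fact (2*r+1))"
      by (rule mult_le_mono) (use Suc \<open>12 \<le> _\<close> in auto)
    also have "\<dots> = 24 * fact (2*Suc r+1)" unfolding f by (simp only: mult.assoc mult.commute mult.left_commute)
    finally show ?thesis .
  qed
qed

lemma TT_nth0: "fps_nth TT 0 = 0" by (simp add: TT_def)

lemma TT_pow_bound:
  assumes "N \<ge> 1"
  shows "fps_nth (TT^s) N \<le> (24 / real N) * (real N ^ 2 / 12) ^ s"
proof (cases s)
  case 0 then show ?thesis using assms by simp
next
  case (Suc r)
  have b: "real ((N+r) choose (2*r+1)) * fact (2*r+1) \<le> real N ^ (2*r+1)"
  proof -
    have "real (((N+r) choose (2*r+1)) * fact (2*r+1)) \<le> real (N^(2*r+1))"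
      using binom_bound[of N r] by (simp only: of_nat_le_iff)
    then show ?thesis by (simp only: of_nat_mult of_nat_fact of_nat_power)
  qed
  have f: "(12::real)^(Suc r) \<le> 24 * fact (2*r+1)"
  proof -
    have "real ((12::nat)^(Suc r)) \<le> real (24 * fact (2*r+1))"
      using fact_bound[of r] by (simp only: of_nat_le_iff)
    then show ?thesis by (simp only: of_nat_mult of_nat_fact of_nat_power of_nat_numeral)
  qed
  have fp: "(0::real) < fact (2*r+1)" by simp
  have "fps_nth (TT^s) N = real ((N+r) choose (2*r+1))" using Suc TT_pow by simp
  also have "\<dots> \<le> real N ^ (2*r+1) / fact (2*r+1)" using b fp by (simp add: field_simps)
  also have "\<dots> \<le> real N ^ (2*r+1) * 24 / 12^(Suc r)"
  proof -
    have "real N ^ (2*r+1) * 12^(Suc r) \<le> real N ^ (2*r+1) * (24 * fact (2*r+1))"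
      by (rule mult_left_mono[OF f]) simp
    then show ?thesis using fp by (simp add: field_simps)
  qed
  also have "\<dots> = (24 / real N) * (real N ^ 2 / 12) ^ s"
    using assms Suc by (simp add: field_simps power_mult_distrib power_divide flip: power_mult) (simp add: power2_eq_square)
  finally show ?thesis .
qed


definition maj :: "nat \<Rightarrow> int fps \<Rightarrow> real fps \<Rightarrow> bool" where
  "maj N f F \<longleftrightarrow> (\<forall>m\<le>N. \<bar>real_of_int (fps_nth f m)\<bar> \<le> fps_nth F m)"

lemma maj_mult:
  assumes "maj N f F" "maj N g G" shows "maj N (f*g) (F*G)"
  unfolding maj_def
proof (intro allI impI)
  fix m assume m: "m \<le> N"
  have "\<bar>real_of_int (fps_nth (f*g) m)\<bar> = \<bar>\<Sum>i=0..m. real_of_int (fps_nth f i) * real_of_int (fps_nth g (m-i))\<bar>"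
    by (simp add: fps_mult_nth)
  also have "\<dots> \<le> (\<Sum>i=0..m. \<bar>real_of_int (fps_nth f i)\<bar> * \<bar>real_of_int (fps_nth g (m-i))\<bar>)"
    by (rule order_trans[OF sum_abs]) (simp add: abs_mult)
  also have "\<dots> \<le> (\<Sum>i=0..m. fps_nth F i * fps_nth G (m-i))"
  proof (rule sum_mono)
    fix i assume i: "i \<in> {0..m}"
    have a: "\<bar>real_of_int (fps_nth f i)\<bar> \<le> fps_nth F i" using assms(1) i m unfolding maj_def by auto
    have b: "\<bar>real_of_int (fps_nth g (m-i))\<bar> \<le> fps_nth G (m-i)" using assms(2) i m unfolding maj_def by auto
    show "\<bar>real_of_int (fps_nth f i)\<bar> * \<bar>real_of_int (fps_nth g (m-i))\<bar> \<le> fps_nth F i * fps_nth G (m-i)"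
      by (rule mult_mono[OF a b]) (use a in auto)
  qed
  also have "\<dots> = fps_nth (F*G) m" by (simp add: fps_mult_nth)
  finally show "\<bar>real_of_int (fps_nth (f*g) m)\<bar> \<le> fps_nth (F*G) m" .
qed

lemma maj_one: "maj N 1 1"
  unfolding maj_def by auto

lemma maj_pow: assumes "maj N f F" shows "maj N (f^a) (F^a)"
  by (induction a) (auto intro: maj_mult assms maj_one)

lemma coeff_nonneg_mult:
  assumes "\<forall>i. 0 \<le> coeff p i" "\<forall>i. 0 \<le> coeff q i" shows "\<forall>i. (0::real) \<le> coeff (p*q) i"
  using assms by (auto simp: coeff_mult intro!: sum_nonneg)

lemma coeff_nonneg_pow:
  assumes "\<forall>i. (0::real) \<le> coeff p i" shows "\<forall>i. 0 \<le> coeff (p^a) i"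
proof (induction a)
  case 0 then show ?case by (auto simp: coeff_1)
next
  case (Suc a) then show ?case using coeff_nonneg_mult[OF assms] by simp
qed

lemma comp_bound:
  assumes N: "N \<ge> 1" and nn: "\<forall>i. (0::real) \<le> coeff P i"
  shows "fps_nth (fps_of_poly P oo TT) N \<le> (24 / real N) * poly P (real N ^ 2 / 12)"
proof -
  define x where "x = real N ^ 2 / 12"
  have x0: "x \<ge> 0" by (simp add: x_def)
  have "fps_nth (fps_of_poly P oo TT) N = (\<Sum>i=0..N. coeff P i * fps_nth (TT^i) N)"
    by (simp add: fps_compose_nth)
  also have "\<dots> \<le> (\<Sum>i=0..N. coeff P i * ((24 / real N) * x ^ i))"
    using TT_pow_bound[OF N] nn unfolding x_def by (intro sum_mono mult_left_mono) auto
  also have "\<dots> = (24 / real N) * (\<Sum>i=0..N. coeff P i * x ^ i)"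
    by (simp add: sum_distrib_left algebra_simps)
  also have "(\<Sum>i=0..N. coeff P i * x ^ i) \<le> poly P x"
  proof -
    have "(\<Sum>i=0..N. coeff P i * x ^ i) \<le> (\<Sum>i\<in>{0..N} \<union> {..degree P}. coeff P i * x ^ i)"
      by (rule sum_mono2) (use nn x0 in auto)
    also have "\<dots> = (\<Sum>i\<le>degree P. coeff P i * x ^ i)"
      by (rule sum.mono_neutral_right) (auto simp: coeff_eq_0)
    also have "\<dots> = poly P x" by (simp add: poly_altdef)
    finally show ?thesis .
  qed
  then have "(24 / real N) * (\<Sum>i=0..N. coeff P i * x ^ i) \<le> (24 / real N) * poly P x"
    by (rule mult_left_mono) simp
  finally show ?thesis by (simp add: x_def)
qed




lemma harm_le_ln: "m \<ge> 1 \<Longrightarrow> (harm m :: real) \<le> 1 + ln (real m)"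
proof -
  assume "m \<ge> 1"
  then obtain k where k: "m = Suc k" by (cases m) auto
  have "harm (Suc k) - ln (real (Suc k)) \<le> (harm (Suc 0) :: real) - ln (real (Suc 0))"
    using decseqD[OF decseq_harm_diff_ln, of 0 k] by simp
  then show ?thesis using k by (simp add: harm_def)
qed

lemma sigma_nonneg: "sigma l m \<ge> 0"
  unfolding sigma_def by (rule sum_nonneg) simp

lemma div_div_dvd:
  fixes m d :: nat
  assumes m: "m \<ge> 1" and d: "d dvd m" shows "m div (m div d) = d"
proof -
  obtain q where q: "m = d * q" using d by (auto elim: dvdE)
  have "q \<noteq> 0" using m q by auto
  have "d \<noteq> 0" using m q by auto
  then have "m div d = q" using q by simp
  then show ?thesis using q \<open>q \<noteq> 0\<close> by simp
qed

lemma div_dvd_m: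
  fixes m d :: nat
  assumes m: "m \<ge> 1" and d: "d dvd m" shows "(m div d) dvd m"
proof -
  obtain q where q: "m = d * q" using d by (auto elim: dvdE)
  have "d \<noteq> 0" using m q by auto
  then have "m div d = q" using q by simp
  then show ?thesis using q by simp
qed

lemma sig1_bound:
  assumes m: "m \<ge> 1"
  shows "real_of_int (sigma 1 m) \<le> real m * (1 + ln (real m))"
proof -
  define D where "D = {d. d dvd m}"
  have fin: "finite D" using m unfolding D_def by simp
  have D1: "D \<subseteq> {1..m}" using m unfolding D_def
    by (auto simp: dvd_imp_le Suc_le_eq dvd_pos_nat)
  have "real_of_int (sigma 1 m) = (\<Sum>d\<in>D. real d)" unfolding sigma_def D_def by simp
  also have "\<dots> = (\<Sum>d\<in>D. real (m div d))"
    by (rule sum.reindex_bij_witness[of D "\<lambda>d. m div d" "\<lambda>d. m div d"])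
       (use m in \<open>auto simp: D_def div_div_dvd div_dvd_m\<close>)
  also have "\<dots> = (\<Sum>d\<in>D. real m / real d)"
    by (rule sum.cong) (auto simp: D_def real_of_nat_div)
  also have "\<dots> \<le> (\<Sum>d\<in>{1..m}. real m / real d)"
    by (rule sum_mono2) (use D1 in auto)
  also have "\<dots> = real m * harm m"
    by (simp add: harm_def sum_distrib_left field_simps)
  also have "\<dots> \<le> real m * (1 + ln (real m))"
    by (rule mult_left_mono) (use harm_le_ln m in auto)
  finally show ?thesis .
qed

lemma sigl_bound:
  assumes m: "m \<ge> 1"
  shows "sigma (Suc l) m \<le> int m ^ l * sigma 1 m"
proof -
  have "sigma (Suc l) m = (\<Sum>d | d dvd m. int d ^ l * int d)" unfolding sigma_def by (simp add: power_Suc2 mult.commute)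
  also have "\<dots> \<le> (\<Sum>d | d dvd m. int m ^ l * int d)"
  proof (rule sum_mono)
    fix d assume "d \<in> {d. d dvd m}"
    then have "d \<le> m" using m by (auto intro: dvd_imp_le)
    then show "int d ^ l * int d \<le> int m ^ l * int d"
      by (intro mult_right_mono power_mono) auto
  qed
  also have "\<dots> = int m ^ l * sigma 1 m" unfolding sigma_def by (simp add: sum_distrib_left)
  finally show ?thesis .
qed



lemma maj_E:
  fixes f :: "int fps" and C :: int
  assumes N: "N \<ge> 1" and f0: "fps_nth f 0 = 1" and fm: "\<And>m. m \<ge> 1 \<Longrightarrow> fps_nth f m = C * sigma (Suc l) m"
  shows "maj N f (1 + fps_const (real_of_int \<bar>C\<bar> * real N ^ l * (1 + ln (real N))) * TT)"
  unfolding maj_def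
proof (intro allI impI)
  fix m assume mN: "m \<le> N"
  show "\<bar>real_of_int (fps_nth f m)\<bar> \<le> fps_nth (1 + fps_const (real_of_int \<bar>C\<bar> * real N ^ l * (1 + ln (real N))) * TT) m"
  proof (cases "m = 0")
    case True then show ?thesis using f0 by (simp add: TT_def)
  next
    case False
    then have m1: "m \<ge> 1" by simp
    have s1: "real_of_int (sigma 1 m) \<le> real m * (1 + ln (real m))" by (rule sig1_bound[OF m1])
    have lnm: "ln (real m) \<le> ln (real N)" using m1 mN by simp
    have sl: "real_of_int (sigma (Suc l) m) \<le> real m ^ l * real_of_int (sigma 1 m)"
      using sigl_bound[OF m1, of l] by (metis of_int_le_iff of_int_mult of_int_of_nat_eq of_int_power)
    have "real_of_int (sigma (Suc l) m) \<le> real m ^ l * (real m * (1 + ln (real m)))"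
      using sl s1 by (meson mult_left_mono order_trans zero_le_power of_nat_0_le_iff)
    also have "\<dots> \<le> real N ^ l * (real m * (1 + ln (real N)))"
      using mN lnm m1 by (intro mult_mono power_mono) auto
    finally have sb: "real_of_int (sigma (Suc l) m) \<le> real N ^ l * (real m * (1 + ln (real N)))" .
    have "\<bar>real_of_int (fps_nth f m)\<bar> = real_of_int \<bar>C\<bar> * real_of_int (sigma (Suc l) m)"
      using fm[OF m1] sigma_nonneg[of "Suc l" m] by (simp add: abs_mult)
    also have "\<dots> \<le> real_of_int \<bar>C\<bar> * (real N ^ l * (real m * (1 + ln (real N))))"
      by (rule mult_left_mono[OF sb]) simp
    also have "\<dots> = fps_nth (1 + fps_const (real_of_int \<bar>C\<bar> * real N ^ l * (1 + ln (real N))) * TT) m"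
      using False by (simp add: TT_def)
    finally show ?thesis .
  qed
qed

lemma lin_comp: "fps_of_poly [:1, c:] oo TT = 1 + fps_const (c::real) * TT"
proof -
  have "fps_of_poly [:1, c:] = 1 + fps_const c * fps_X" by (rule fps_of_poly_linear')
  then show ?thesis
    by (simp only:) (simp add: fps_compose_add_distrib fps_compose_mult_distrib TT_nth0)
qed

lemma nth1_mult:
  fixes f g :: "int fps"
  assumes "fps_nth f 0 = 1" "fps_nth g 0 = 1"
  shows "fps_nth (f*g) 1 = fps_nth f 1 + fps_nth g 1" "fps_nth (f*g) 0 = 1"
  using assms by (simp_all add: fps_mult_nth)

lemma nth1_pow:
  fixes f :: "int fps"
  assumes "fps_nth f 0 = 1"
  shows "fps_nth (f^a) 1 = int a * fps_nth f 1 \<and> fps_nth (f^a) 0 = 1"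
proof (induction a)
  case 0 then show ?case by simp
next
  case (Suc a) then show ?case using nth1_mult[of "f^a" f] assms by (simp add: algebra_simps)
qed

lemma sigma_1: "sigma l 1 = 1"
  unfolding sigma_def by simp

lemma pow_ge: "2 * real (Suc j) \<le> 2 ^ (2 * Suc j - 1)"
proof (induction j)
  case 0 then show ?case by simp
next
  case (Suc j)
  have "(2::real) ^ (2 * Suc (Suc j) - 1) = 4 * 2 ^ (2 * Suc j - 1)"
    by (simp add: power_Suc)
  then show ?case using Suc by simp
qed



lemma E2_nth: "fps_nth E2 0 = 1" "m \<ge> 1 \<Longrightarrow> fps_nth E2 m = (-24) * sigma (Suc 0) m"
  by (auto simp: E2_def)
lemma E4_nth: "fps_nth E4 0 = 1" "m \<ge> 1 \<Longrightarrow> fps_nth E4 m = 240 * sigma (Suc 2) m"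
  by (auto simp: E4_def)
lemma E6_nth: "fps_nth E6 0 = 1" "m \<ge> 1 \<Longrightarrow> fps_nth E6 m = (-504) * sigma (Suc 4) m"
  by (auto simp: E6_def)

lemma lin_nonneg: "(c::real) \<ge> 0 \<Longrightarrow> \<forall>i. 0 \<le> coeff [:1, c:] i"
  by (auto simp: coeff_pCons split: nat.split)

lemma case_one:
  fixes a b c k :: nat
  assumes "k = a + 2 * b + 3 * c"
  shows "\<bar>real_of_int (s_coeff a b c 1)\<bar>
           \<le> 109 * 2 ^ (2 * k - 1) * real 1 ^ (2 * k - 1) * (1 + ln (real 1)) ^ k"
proof -
  have p2: "fps_nth (E2^a) 1 = int a * (-24) \<and> fps_nth (E2^a) 0 = 1"
    using nth1_pow[of E2 a] E2_nth(1) E2_nth(2)[of 1] by (simp add: sigma_1 sigma_1[simplified])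
  have p4: "fps_nth (E4^b) 1 = int b * 240 \<and> fps_nth (E4^b) 0 = 1"
    using nth1_pow[of E4 b] E4_nth(1) E4_nth(2)[of 1] by (simp add: sigma_1 sigma_1[simplified])
  have p6: "fps_nth (E6^c) 1 = int c * (-504) \<and> fps_nth (E6^c) 0 = 1"
    using nth1_pow[of E6 c] E6_nth(1) E6_nth(2)[of 1] by (simp add: sigma_1 sigma_1[simplified])
  have "s_coeff a b c 1 = int a * (-24) + int b * 240 + int c * (-504)"
    unfolding s_coeff_def using nth1_mult[of "E2^a" "E4^b"] nth1_mult[of "E2^a * E4^b" "E6^c"] p2 p4 p6
    by simp
  then have s: "\<bar>real_of_int (s_coeff a b c 1)\<bar> \<le> 24 * real a + 240 * real b + 504 * real c"
    by simp
  show ?thesis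
  proof (cases k)
    case 0 then show ?thesis using assms s by simp
  next
    case (Suc j)
    have "2 * real k \<le> 2 ^ (2 * k - 1)" using pow_ge[of j] Suc by simp
    then show ?thesis using s assms by simp
  qed
qed


lemma numeric:
  fixes N :: nat and L :: real
  assumes N: "N \<ge> 2" and L: "L \<ge> 5/3"
  shows "1 + 24 * L * (real N ^ 2 / 12) \<le> 4 * real N ^ 2 * L"
    "1 + 240 * real N ^ 2 * L * (real N ^ 2 / 12) \<le> (4 * real N ^ 2 * L) ^ 2"
    "1 + 504 * real N ^ 4 * L * (real N ^ 2 / 12) \<le> (4 * real N ^ 2 * L) ^ 3"
proof -
  define y where "y = real N ^ 2"
  have n2: "real N \<ge> 2" using N by simp
  have "(2::real)^2 \<le> real N ^ 2" by (rule power_mono[OF n2]) simp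
  then have y: "y \<ge> 4" unfolding y_def by simp
  have N4: "real N ^ 4 = y * y" unfolding y_def by (simp add: power2_eq_square power4_eq_xxxx)
  have "4 * (5/3) \<le> y * L" by (rule mult_mono) (use y L in auto)
  then have yL: "y * L \<ge> 1" by simp
  have "4 * 1 \<le> y * (y * L)" by (rule mult_mono) (use y yL in auto)
  then have yyL: "y * y * L \<ge> 1" by (simp add: mult.assoc)
  have "4 * 1 \<le> y * (y * y * L)" by (rule mult_mono) (use y yyL in auto)
  then have yyyL: "y * y * y * L \<ge> 1" by (simp add: mult.assoc)
  show "1 + 24 * L * (real N ^ 2 / 12) \<le> 4 * real N ^ 2 * L"
    unfolding y_def[symmetric] using yL by (simp add: mult.commute)
  have "1 + 240 * y * L * (y / 12) \<le> (4 * y * L) ^ 2"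
  proof -
    have "y * y * L * (16 * L - 20) \<ge> y * y * L * 1"
      using yyL L by (intro mult_left_mono) auto
    then show ?thesis using yyL by (simp add: power2_eq_square algebra_simps)
  qed
  then show "1 + 240 * real N ^ 2 * L * (real N ^ 2 / 12) \<le> (4 * real N ^ 2 * L) ^ 2"
    unfolding y_def[symmetric] .
  have "1 + 504 * (y * y) * L * (y / 12) \<le> (4 * y * L) ^ 3"
  proof -
    have "y * y * y * L * (64 * L * L - 42) \<ge> y * y * y * L * 1"
    proof (rule mult_left_mono)
      have "(5/3) * (5/3) \<le> L * L" by (rule mult_mono) (use L in auto)
      then show "1 \<le> 64 * L * L - 42" by simp
    qed (use yyyL in auto)
    then show ?thesis using yyyL by (simp add: power3_eq_cube algebra_simps)
  qed
  then show "1 + 504 * real N ^ 4 * L * (real N ^ 2 / 12) \<le> (4 * real N ^ 2 * L) ^ 3"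
    unfolding N4 y_def[symmetric] .
qed


lemma case_big:
  fixes a b c k N :: nat
  assumes k: "k = a + 2 * b + 3 * c" and N: "N \<ge> 2"
  shows "\<bar>real_of_int (s_coeff a b c N)\<bar>
           \<le> 109 * 2 ^ (2 * k - 1) * real N ^ (2 * k - 1) * (1 + ln (real N)) ^ k"
proof -
  define L where "L = 1 + ln (real N)"
  have N1: "N \<ge> 1" using N by simp
  have "ln (2::real) \<le> ln (real N)" using N by simp
  then have L53: "L \<ge> 5/3" using ln2_ge_two_thirds unfolding L_def by simp
  define a2 where "a2 = 24 * L"
  define a4 where "a4 = 240 * real N ^ 2 * L"
  define a6 where "a6 = 504 * real N ^ 4 * L"
  have m2: "maj N E2 (1 + fps_const a2 * TT)"
    using maj_E[OF N1, of E2 "-24" 0] E2_nth unfolding a2_def L_def by simp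
  have m4: "maj N E4 (1 + fps_const a4 * TT)"
    using maj_E[OF N1, of E4 240 2] E4_nth unfolding a4_def L_def by simp
  have m6: "maj N E6 (1 + fps_const a6 * TT)"
    using maj_E[OF N1, of E6 "-504" 4] E6_nth unfolding a6_def L_def by simp
  define P where "P = [:1, a2:]^a * [:1, a4:]^b * [:1, a6:]^c"
  have L0: "L \<ge> 0" using L53 by simp
  have nn: "\<forall>i. 0 \<le> coeff P i"
    unfolding P_def using L0
    by (intro coeff_nonneg_mult coeff_nonneg_pow lin_nonneg) (auto simp: a2_def a4_def a6_def)
  have eq: "fps_of_poly P oo TT = (1 + fps_const a2 * TT)^a * (1 + fps_const a4 * TT)^b * (1 + fps_const a6 * TT)^c"
    unfolding P_def by (simp add: fps_of_poly_mult fps_of_poly_power fps_compose_mult_distrib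
        fps_compose_power[symmetric, OF TT_nth0] TT_nth0 lin_comp)
  have mm: "maj N (E2^a * E4^b * E6^c) (fps_of_poly P oo TT)"
    unfolding eq by (intro maj_mult maj_pow m2 m4 m6)
  define x where "x = real N ^ 2 / 12"
  have "\<bar>real_of_int (s_coeff a b c N)\<bar> \<le> fps_nth (fps_of_poly P oo TT) N"
    using mm unfolding maj_def s_coeff_def by simp
  also have "\<dots> \<le> (24 / real N) * poly P x"
    unfolding x_def by (rule comp_bound[OF N1 nn])
  finally have s1: "\<bar>real_of_int (s_coeff a b c N)\<bar> \<le> (24 / real N) * poly P x" .
  have "poly P x = (1 + a2 * x)^a * (1 + a4 * x)^b * (1 + a6 * x)^c"
    unfolding P_def by (simp add: algebra_simps)
  also have "\<dots> \<le> (4 * real N ^ 2 * L)^a * ((4 * real N ^ 2 * L)^2)^b * ((4 * real N ^ 2 * L)^3)^c"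
  proof -
    note nm = numeric[OF N L53]
    have x0: "x \<ge> 0" by (simp add: x_def)
    have p1: "0 \<le> 1 + a2 * x" using x0 L0 by (simp add: a2_def)
    have p2: "0 \<le> 1 + a4 * x" using x0 L0 by (simp add: a4_def)
    have p3: "0 \<le> 1 + a6 * x" using x0 L0 by (simp add: a6_def)
    have "(1 + a2 * x)^a \<le> (4 * real N ^ 2 * L)^a"
      by (rule power_mono) (use nm(1) p1 in \<open>auto simp: a2_def x_def\<close>)
    moreover have "(1 + a4 * x)^b \<le> ((4 * real N ^ 2 * L)^2)^b"
      by (rule power_mono) (use nm(2) p2 in \<open>auto simp: a4_def x_def\<close>)
    moreover have "(1 + a6 * x)^c \<le> ((4 * real N ^ 2 * L)^3)^c"
      by (rule power_mono) (use nm(3) p3 in \<open>auto simp: a6_def x_def\<close>)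
    ultimately show ?thesis using p1 p2 p3 L0
      by (intro mult_mono) (auto intro!: mult_nonneg_nonneg zero_le_power)
  qed
  also have "\<dots> = (4 * real N ^ 2 * L) ^ k"
    unfolding k by (simp add: power_add power_mult)
  finally have pb: "poly P x \<le> (4 * real N ^ 2 * L) ^ k" .
  have main: "\<bar>real_of_int (s_coeff a b c N)\<bar> \<le> (24 / real N) * (4 * real N ^ 2 * L) ^ k"
    by (rule order_trans[OF s1 mult_left_mono[OF pb]]) simp
  show ?thesis
  proof (cases k)
    case 0
    have "24 / real N \<le> 109" using N1 by (simp add: field_simps)
    then show ?thesis using main 0 by simp
  next
    case (Suc j)
    have f4: "(4::real)^j = 2^(j*2)" 
    proof -
      have "(2::real)^(j*2) = (2^2)^j" by (simp only: mult.commute[of j 2] power_mult)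
      then show ?thesis by simp
    qed
    have "(24 / real N) * (4 * real N ^ 2 * L) ^ k = 48 * 2 ^ (2 * k - 1) * real N ^ (2 * k - 1) * L ^ k"
      using N1 Suc by (simp add: power_mult_distrib field_simps flip: power_mult) (simp add: power2_eq_square power_mult_distrib f4)
    also have "\<dots> \<le> 109 * 2 ^ (2 * k - 1) * real N ^ (2 * k - 1) * L ^ k"
      using L0 by (intro mult_right_mono) auto
    finally show ?thesis using main unfolding L_def by simp
  qed
qed

theorem lemma3p2:
  fixes a b c k n :: nat
  assumes "k = a + 2 * b + 3 * c" and "n \<ge> 1"
  shows "\<bar>real_of_int (s_coeff a b c n)\<bar>
           \<le> 109 * 2 ^ (2 * k - 1) * real n ^ (2 * k - 1) * (1 + ln (real n)) ^ k"
proof (cases "n = 1")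
  case True then show ?thesis using case_one[OF assms(1)] by simp
next
  case False then show ?thesis using case_big[OF assms(1)] assms(2) by simp
qed


end
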